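(* Let $\mathbb G=V_1\times V_2$ be a step-two Carnot group and $f\in\mathcal A_h(\mathbb G)$. For $z\in V_2$ define $f_z:V_1\to\mathbb R$ by $f_z(x):=f(x,z)$. Then $f_z$ is affine (in the usual sense) on $V_1$ for every $z\in V_2$.
   Context: A step-two Carnot group is $\mathbb G=V_1\times V_2$, where $V_1,V_2$ are finite-dimensional real vector spaces with $V_2\neq\{0\}$, equipped with a bilinear skew-symmetric map $[\cdot,\cdot]:V_1\times V_1\to V_2$ with $\operatorname{span}\{[x,x']:x,x'\in V_1\}=V_2$, and group law $(x,z)\cdot(x',z')=(x+x',z+z'+[x,x'])$. $\mathcal A_h(\mathbb G)$ is the space of $h$-affine maps $f:\mathbb G\to\mathbb R$, i.e. such that for all $(x,z)\in\mathbb G$, $y\in V_1$, $t\mapsto f((x,z)\cdot(ty,0))$ is affine. *)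

theory Defs
  imports "HOL-Analysis.Analysis"
begin

text \<open>Step-two Carnot group data: V1 = 'a, V2 = 'b (finite-dimensional real vector
spaces, modelled as euclidean_space types; V2 nonzero since euclidean spaces have
nonempty basis), with a bilinear skew-symmetric bracket whose image spans V2.\<close>

definition step2_carnot :: "('a::euclidean_space \<Rightarrow> 'a \<Rightarrow> 'b::euclidean_space) \<Rightarrow> bool" where
  "step2_carnot br \<longleftrightarrow> bilinear br \<and> (\<forall>x y. br x y = - br y x)
     \<and> span {br x y | x y. True} = UNIV"

definition carnot_mult :: "('a \<Rightarrow> 'a \<Rightarrow> 'b) \<Rightarrow> ('a::real_vector \<times> 'b::real_vector) \<Rightarrow> 'a \<times> 'b \<Rightarrow> 'a \<times> 'b" where
  "carnot_mult br p q = (fst p + fst q, snd p + snd q + br (fst p) (fst q))"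

definition affine_fun :: "('a::real_vector \<Rightarrow> 'c::real_vector) \<Rightarrow> bool" where
  "affine_fun g \<longleftrightarrow> (\<exists>l c. linear l \<and> (\<forall>x. g x = l x + c))"

definition h_affine :: "('a::real_vector \<Rightarrow> 'a \<Rightarrow> 'b::real_vector) \<Rightarrow> ('a \<times> 'b \<Rightarrow> real) \<Rightarrow> bool" where
  "h_affine br f \<longleftrightarrow> (\<forall>p y. affine_fun (\<lambda>t::real. f (carnot_mult br p (t *\<^sub>R y, 0))))"

end

theory Submission
  imports Defs
begin

lemma aff_realD:
  assumes "affine_fun (\<phi>::real \<Rightarrow> real)"
  shows "\<exists>A B. \<forall>t. \<phi> t = A + B * t"
proof -
  obtain l c where l: "linear l" and e: "\<forall>x. \<phi> x = l x + c"
    using assms unfolding affine_fun_def by blast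
  have "l t = t * l 1" for t
    using linear_cmul[OF l, of t 1] by simp
  then show ?thesis using e by (metis add.commute mult.commute)
qed

lemma aff_realI:
  assumes "\<And>t. \<phi> t = A + B * (t::real)"
  shows "affine_fun \<phi>"
  unfolding affine_fun_def
proof (intro exI conjI allI)
  show "linear (\<lambda>t. t * B)"
    by (rule bounded_linear.linear[OF bounded_linear_mult_left])
  fix x show "\<phi> x = x * B + A" using assms by (simp add: mult.commute)
qed

lemma aff_lines:
  fixes g :: "'a::real_vector \<Rightarrow> real"
  assumes L: "\<And>x d. affine_fun (\<lambda>u. g (x + u *\<^sub>R d))"
  shows "affine_fun g"
proof -
  have seg: "g (a + u *\<^sub>R (b - a)) = g a + u * (g b - g a)" for a b u
  proof -
    obtain A B where AB: "\<forall>t. g (a + t *\<^sub>R (b - a)) = A + B * t"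
      using aff_realD[OF L[of a "b - a"]] by blast
    from AB[rule_format, of 0] AB[rule_format, of 1] AB[rule_format, of u]
    show ?thesis by simp
  qed
  define h where "h x = g x - g 0" for x
  have hs: "h (u *\<^sub>R x) = u * h x" for u x
    using seg[of 0 u x] by (simp add: h_def algebra_simps)
  have ha: "h (a + b) = h a + h b" for a b
  proof -
    have m: "g (a + (1/2) *\<^sub>R (b - a)) = g a + (1/2) * (g b - g a)"
      by (rule seg)
    have hh: "(1/2) *\<^sub>R a + (1/2) *\<^sub>R a = a"
      by (metis scaleR_add_left field_sum_of_halves scaleR_one)
    have eq: "a + (1/2) *\<^sub>R (b - a) = (1/2) *\<^sub>R (a + b)"
      by (simp add: scaleR_diff_right scaleR_add_right) (metis hh add_diff_cancel_right')
    have g2: "g ((1/2) *\<^sub>R (a + b)) = g a + (1/2) * (g b - g a)"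
      using m unfolding eq .
    show ?thesis using g2 hs[of "1/2" "a + b"] unfolding h_def by (simp add: field_simps)
  qed
  have "linear h"
    by (rule linearI) (use ha hs in auto)
  then show ?thesis unfolding affine_fun_def
    by (intro exI[of _ h] exI[of _ "g 0"]) (simp add: h_def)
qed

lemma pts:
  fixes br :: "'a::euclidean_space \<Rightarrow> 'a \<Rightarrow> 'b::euclidean_space"
  assumes bl: "bilinear br" and xx: "\<And>x. br x x = 0" and dx: "br d x = - c" and cd: "c = br x d"
  and y_def: "y = (- 1/3) *\<^sub>R x + u *\<^sub>R d"
  shows "carnot_mult br (x + u *\<^sub>R d, z) (1 *\<^sub>R y, 0)
          = carnot_mult br ((2/3) *\<^sub>R x, z) (u *\<^sub>R (2 *\<^sub>R d), 0)"
   "carnot_mult br (x + u *\<^sub>R d, z) ((-3) *\<^sub>R y, 0)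
          = carnot_mult br (2 *\<^sub>R x, z) (u *\<^sub>R (- 2 *\<^sub>R d), 0)"
proof -
  note bs = bilinear_ladd[OF bl] bilinear_radd[OF bl] bilinear_lmul[OF bl] bilinear_rmul[OF bl] bilinear_rsub[OF bl] bilinear_lsub[OF bl] 
     bilinear_lneg[OF bl] bilinear_rneg[OF bl] xx dx cd[symmetric]
  have b: "br (x + u *\<^sub>R d) y = ((4/3) * u) *\<^sub>R c"
  proof -
    have "br (x + u *\<^sub>R d) y = u *\<^sub>R c + (u/3) *\<^sub>R c"
      by (simp add: y_def bs)
    also have "\<dots> = ((4/3) * u) *\<^sub>R c" by (simp add: scaleR_add_left[symmetric])
    finally show ?thesis .
  qed
  have b1: "br ((2/3) *\<^sub>R x) (u *\<^sub>R (2 *\<^sub>R d)) = ((4/3) * u) *\<^sub>R c"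
    by (simp add: bs)
  have b3: "br (2 *\<^sub>R x) (u *\<^sub>R (- 2 *\<^sub>R d)) = (-4 * u) *\<^sub>R c"
    by (simp add: bs)
  have b3': "br (x + u *\<^sub>R d) ((-3) *\<^sub>R y) = (-4 * u) *\<^sub>R c"
    unfolding bilinear_rmul[OF bl] b by simp
  have f1: "x + u *\<^sub>R d + y = (2/3) *\<^sub>R x + u *\<^sub>R (2 *\<^sub>R d)"
  proof -
    have "x + u *\<^sub>R d + y = (1 + (-1/3)) *\<^sub>R x + (u + u) *\<^sub>R d"
      unfolding y_def scaleR_add_left by simp
    then show ?thesis by simp
  qed
  have f3: "x + u *\<^sub>R d + (-3) *\<^sub>R y = 2 *\<^sub>R x + u *\<^sub>R (- 2 *\<^sub>R d)"
  proof -
    have "x + u *\<^sub>R d + (-3) *\<^sub>R y = (1 + 1) *\<^sub>R x + (u + (-3 * u)) *\<^sub>R d"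
      unfolding y_def scaleR_add_left scaleR_add_right by simp
    then show ?thesis by simp
  qed
  show "carnot_mult br (x + u *\<^sub>R d, z) (1 *\<^sub>R y, 0)
          = carnot_mult br ((2/3) *\<^sub>R x, z) (u *\<^sub>R (2 *\<^sub>R d), 0)"
    unfolding carnot_mult_def using b b1 f1 by simp
  show "carnot_mult br (x + u *\<^sub>R d, z) ((-3) *\<^sub>R y, 0)
          = carnot_mult br (2 *\<^sub>R x, z) (u *\<^sub>R (- 2 *\<^sub>R d), 0)"
    unfolding carnot_mult_def using b3 b3' f3 by (simp del: scaleR_minus_left)
qed

theorem corollary3p8:
  fixes br :: "'a::euclidean_space \<Rightarrow> 'a \<Rightarrow> 'b::euclidean_space"
    and f :: "'a \<times> 'b \<Rightarrow> real"
  assumes "step2_carnot br"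
    and "h_affine br f"
  shows "\<forall>z. affine_fun (\<lambda>x. f (x, z))"
proof
  fix z
  have bl: "bilinear br" and sk: "\<And>x y. br x y = - br y x"
    using assms(1) unfolding step2_carnot_def by blast+
  have xx: "br x x = 0" for x
  proof -
    have "2 *\<^sub>R br x x = 0" using sk[of x x] by (simp add: scaleR_2 eq_neg_iff_add_eq_0)
    then show ?thesis by simp
  qed
  note bs = bilinear_ladd[OF bl] bilinear_radd[OF bl] bilinear_lmul[OF bl]
    bilinear_rmul[OF bl] bilinear_lneg[OF bl] bilinear_rneg[OF bl]
    bilinear_lzero[OF bl] bilinear_rzero[OF bl] xx
  have HA: "\<exists>A B. \<forall>t. f (carnot_mult br p (t *\<^sub>R y, 0)) = A + B * t" for p y
  proof -
    have "affine_fun (\<lambda>t. f (carnot_mult br p (t *\<^sub>R y, 0)))"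
      using assms(2) unfolding h_affine_def by blast
    then show ?thesis by (rule aff_realD)
  qed
  show "affine_fun (\<lambda>x. f (x, z))"
  proof (rule aff_lines)
    fix x d
    define c where "c = br x d"
    have dx: "br d x = - c" using sk[of d x] by (simp add: c_def)
    obtain A1 B1 where E1: "\<forall>t. f (carnot_mult br ((2/3) *\<^sub>R x, z) (t *\<^sub>R (2 *\<^sub>R d), 0)) = A1 + B1 * t"
      using HA by blast
    obtain A2 B2 where E2: "\<forall>t. f (carnot_mult br (2 *\<^sub>R x, z) (t *\<^sub>R (- 2 *\<^sub>R d), 0)) = A2 + B2 * t"
      using HA by blast
    have key: "f (x + u *\<^sub>R d, z) = (3 * (A1 + B1 * u) + (A2 + B2 * u)) / 4" for u
    proof -
      define y where "y = (- 1/3) *\<^sub>R x + u *\<^sub>R d"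
      obtain A B where E: "\<forall>t. f (carnot_mult br (x + u *\<^sub>R d, z) (t *\<^sub>R y, 0)) = A + B * t"
        using HA by blast
      have p0: "carnot_mult br (x + u *\<^sub>R d, z) (0 *\<^sub>R y, 0) = (x + u *\<^sub>R d, z)"
        by (simp add: carnot_mult_def bilinear_rzero[OF bl])
      note p13 = pts[OF bl xx dx c_def y_def, of z]
      note p1 = p13(1) and p3 = p13(2)
      have "f (x + u *\<^sub>R d, z) = A + B * 0" using E[rule_format, of 0, unfolded p0] .
      moreover have "A1 + B1 * u = A + B * 1" using E[rule_format, of 1, unfolded p1 E1[rule_format]] .
      moreover have "A2 + B2 * u = A + B * (-3)" using E[rule_format, of "-3", unfolded p3 E2[rule_format]] .
      ultimately show ?thesis by (simp add: field_simps)
    qed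
    show "affine_fun (\<lambda>u. f (x + u *\<^sub>R d, z))"
      by (rule aff_realI[of _ "(3 * A1 + A2) / 4" "(3 * B1 + B2) / 4"])
         (simp add: key field_simps)
  qed
qed

end
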